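(* Let $n\geq 1$. The classes $\alpha_{\mathcal D}=\frac{1}{|\mathrm{Stab}_{S_n}(\Delta_{\mathcal D})|}\sum_{\sigma\in S_n}\sigma(\mu_{\Delta_{\mathcal D}})\in H^{|E\mathcal D|}(\mathbb{Z}\mathcal{A}_n;\mathbb{Q})$, for $\mathcal D$ ranging over $\mathcal{D}_n$, form a basis over $\mathbb{Q}$ of $H^\bullet(\mathbb{Z}\mathcal{A}_n;\mathbb{Q})^{S_n}$.
   Context: $P_n$ is the pure braid group on $n$ strands and $\mathbb{Z}\mathcal{A}_n=P_n/[P_n,P_n]\cong\mathbb{Z}^{n(n-1)/2}$. $H^\bullet(\mathbb{Z}\mathcal{A}_n;\mathbb{Q})$ is the exterior algebra on classes $\omega_{ij}$, $1\le i<j\le n$, and the symmetric group $S_n$ acts on it by the algebra automorphisms with $\sigma(\omega_{ij})=\omega_{\sigma(i)\sigma(j)}$ if $\sigma(i)<\sigma(j)$ and $\omega_{\sigma(j)\sigma(i)}$ otherwise. Graphs are finite simple graphs; $K_n$ is the complete graph on $\{1,\dots,n\}$, and $S_n$ acts on subgraphs of $K_n$. For a subgraph $\Delta\subset K_n$ (vertex set $\{1,\dots,n\}$) with edges $(i_1,j_1),\dots,(i_k,j_k)$, $i_t<j_t$, listed lexicographically, $\mu_\Delta=\omega_{i_1j_1}\cdots\omega_{i_kj_k}$. A graph is invariant if every automorphism induces an even permutation of its edge set. $\mathcal{D}_n$ is the set of isomorphism classes of invariant graphs with exactly $n$ vertices (isolated vertices allowed); for each $\mathcal D\in\mathcal D_n$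 a representative $\Delta_{\mathcal D}\subset K_n$ is fixed, and $|E\mathcal D|$ is its number of edges. *)

theory Defs
  imports Complex_Main "HOL-Combinatorics.Permutations"
begin

text \<open>Vertices are 1..n. Edges of K_n are pairs (i,j) with 1 <= i < j <= n.
 A subgraph of K_n (on vertex set {1..n}) is a set of such edges.\<close>

definition Kn :: "nat \<Rightarrow> (nat \<times> nat) set" where
  "Kn n = {(i,j). 1 \<le> i \<and> i < j \<and> j \<le> n}"

definition perms :: "nat \<Rightarrow> (nat \<Rightarrow> nat) set" where
  "perms n = {\<sigma>. \<sigma> permutes {1..n}}"

definition eimg :: "(nat \<Rightarrow> nat) \<Rightarrow> nat \<times> nat \<Rightarrow> nat \<times> nat" where
  "eimg \<sigma> e = (min (\<sigma> (fst e)) (\<sigma> (snd e)), max (\<sigma> (fst e)) (\<sigma> (snd e)))"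

definition gimg :: "(nat \<Rightarrow> nat) \<Rightarrow> (nat \<times> nat) set \<Rightarrow> (nat \<times> nat) set" where
  "gimg \<sigma> \<Delta> = eimg \<sigma> ` \<Delta>"

definition lexless :: "nat \<times> nat \<Rightarrow> nat \<times> nat \<Rightarrow> bool" where
  "lexless e f \<longleftrightarrow> fst e < fst f \<or> (fst e = fst f \<and> snd e < snd f)"

definition Stab :: "nat \<Rightarrow> (nat \<times> nat) set \<Rightarrow> (nat \<Rightarrow> nat) set" where
  "Stab n \<Delta> = {\<sigma> \<in> perms n. gimg \<sigma> \<Delta> = \<Delta>}"

definition edge_perm :: "(nat \<Rightarrow> nat) \<Rightarrow> (nat \<times> nat) set \<Rightarrow> nat \<times> nat \<Rightarrow> nat \<times> nat" where
  "edge_perm \<sigma> \<Delta> = (\<lambda>e. if e \<in> \<Delta> then eimg \<sigma> e else e)"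

definition invariant_graph :: "nat \<Rightarrow> (nat \<times> nat) set \<Rightarrow> bool" where
  "invariant_graph n \<Delta> \<longleftrightarrow> (\<forall>\<sigma> \<in> Stab n \<Delta>. evenperm (edge_perm \<sigma> \<Delta>))"

text \<open>Isomorphism classes of graphs with exactly n vertices = S_n-orbits of subgraphs of K_n.\<close>
definition orbit :: "nat \<Rightarrow> (nat \<times> nat) set \<Rightarrow> (nat \<times> nat) set set" where
  "orbit n \<Delta> = {gimg \<sigma> \<Delta> | \<sigma>. \<sigma> \<in> perms n}"

definition Dclasses :: "nat \<Rightarrow> (nat \<times> nat) set set set" where
  "Dclasses n = {orbit n \<Delta> | \<Delta>. \<Delta> \<subseteq> Kn n \<and> invariant_graph n \<Delta>}"

text \<open>The exterior algebra H(ZA_n;Q) on the classes omega_ij: an element is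
 a rational function on edge sets supported on subsets of Kn n; the coefficient
 at Delta is the coefficient of the monomial mu_Delta.\<close>
definition Hcoh :: "nat \<Rightarrow> ((nat \<times> nat) set \<Rightarrow> rat) set" where
  "Hcoh n = {c. \<forall>\<Gamma>. \<not> \<Gamma> \<subseteq> Kn n \<longrightarrow> c \<Gamma> = 0}"

definition Hdeg :: "nat \<Rightarrow> nat \<Rightarrow> ((nat \<times> nat) set \<Rightarrow> rat) set" where
  "Hdeg n k = {c \<in> Hcoh n. \<forall>\<Gamma>. card \<Gamma> \<noteq> k \<longrightarrow> c \<Gamma> = 0}"

definition mono :: "(nat \<times> nat) set \<Rightarrow> (nat \<times> nat) set \<Rightarrow> rat" where
  "mono \<Delta> = (\<lambda>\<Gamma>. if \<Gamma> = \<Delta> then 1 else 0)"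

text \<open>sigma(mu_Delta) = omega_{sigma e_1} ... omega_{sigma e_k} = (-1)^inv mu_{sigma Delta},
 inv being the number of inversions of the reordering into lexicographic order.\<close>
definition act_sign :: "(nat \<Rightarrow> nat) \<Rightarrow> (nat \<times> nat) set \<Rightarrow> rat" where
  "act_sign \<sigma> \<Delta> = (-1) ^ card {(e,f). e \<in> \<Delta> \<and> f \<in> \<Delta> \<and> lexless e f \<and> lexless (eimg \<sigma> f) (eimg \<sigma> e)}"

definition act :: "nat \<Rightarrow> (nat \<Rightarrow> nat) \<Rightarrow> ((nat \<times> nat) set \<Rightarrow> rat) \<Rightarrow> ((nat \<times> nat) set \<Rightarrow> rat)" where
  "act n \<sigma> c = (\<lambda>\<Gamma>. \<Sum>\<Delta> \<in> {\<Delta>. \<Delta> \<subseteq> Kn n \<and> gimg \<sigma> \<Delta> = \<Gamma>}. act_sign \<sigma> \<Delta> * c \<Delta>)"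

definition Hinv :: "nat \<Rightarrow> ((nat \<times> nat) set \<Rightarrow> rat) set" where
  "Hinv n = {c \<in> Hcoh n. \<forall>\<sigma> \<in> perms n. act n \<sigma> c = c}"

definition alpha :: "nat \<Rightarrow> (nat \<times> nat) set \<Rightarrow> (nat \<times> nat) set \<Rightarrow> rat" where
  "alpha n \<Delta> = (\<lambda>\<Gamma>. (1 / of_nat (card (Stab n \<Delta>))) *
      (\<Sum>\<sigma> \<in> perms n. act n \<sigma> (mono \<Delta>) \<Gamma>))"

end

theory Submission
  imports Defs "HOL-Library.Product_Lexorder"
begin

definition isgn :: "('a::linorder \<Rightarrow> 'a) \<Rightarrow> 'a set \<Rightarrow> int" where
  "isgn f S = (-1) ^ card {(x,y). x \<in> S \<and> y \<in> S \<and> x < y \<and> f y < f x}"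

definition prs :: "'a::linorder set \<Rightarrow> ('a \<times> 'a) set" where
  "prs S = {(x,y). x \<in> S \<and> y \<in> S \<and> x < y}"

lemma finite_prs: "finite S \<Longrightarrow> finite (prs S)"
  by (rule finite_subset[of _ "S \<times> S"]) (auto simp: prs_def)

lemma isgn_prod:
  assumes "finite S"
  shows "isgn f S = (\<Prod>p\<in>prs S. if f (snd p) < f (fst p) then -1 else 1)"
proof -
  have "(\<Prod>p\<in>prs S. if f (snd p) < f (fst p) then -1 else (1::int))
     = (\<Prod>p\<in>prs S \<inter> {p. f (snd p) < f (fst p)}. -1) * (\<Prod>p\<in>prs S \<inter> - {p. f (snd p) < f (fst p)}. 1)"
    by (rule prod.If_cases) (rule finite_prs[OF assms])
  also have "\<dots> = (-1) ^ card (prs S \<inter> {p. f (snd p) < f (fst p)})" by simp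
  also have "prs S \<inter> {p. f (snd p) < f (fst p)} = {(x,y). x \<in> S \<and> y \<in> S \<and> x < y \<and> f y < f x}"
    by (auto simp: prs_def)
  finally show ?thesis by (simp add: isgn_def)
qed

lemma isgn_cong: "(\<And>x. x \<in> S \<Longrightarrow> f x = g x) \<Longrightarrow> isgn f S = isgn g S"
  unfolding isgn_def by (rule arg_cong[where f="\<lambda>A. (-1::int) ^ card A"]) auto

lemma isgn_id: "isgn id S = 1"
proof -
  have e: "{(x,y). x \<in> S \<and> y \<in> S \<and> x < y \<and> id y < id x} = {}" by auto
  show ?thesis unfolding isgn_def e by simp
qed

lemma neg1_pow_cases: "(-1::int)^k = 1 \<or> (-1::int)^k = -1"
  by (cases "even k") auto

lemma isgn_pm: "isgn f S = 1 \<or> isgn f S = -1"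
  unfolding isgn_def by (rule neg1_pow_cases)

lemma isgn_cocycle:
  assumes fin: "finite S" and r: "inj_on \<rho> S" and s: "inj_on \<sigma> (\<rho> ` S)"
  shows "isgn (\<sigma> \<circ> \<rho>) S = isgn \<rho> S * isgn \<sigma> (\<rho> ` S)"
proof -
  define g where "g = (\<lambda>(u,v). if (u < v) = (\<sigma> u < \<sigma> v) then 1 else (-1::int))"
  define h where "h = (\<lambda>(x,y). (min (\<rho> x) (\<rho> y), max (\<rho> x) (\<rho> y)))"
  have t: "(if (\<sigma> \<circ> \<rho>) (snd p) < (\<sigma> \<circ> \<rho>) (fst p) then -1 else 1)
      = (if \<rho> (snd p) < \<rho> (fst p) then -1 else 1) * g (h p)" if "p \<in> prs S" for p
  proof -
    obtain x y where p: "p = (x,y)" "x \<in> S" "y \<in> S" "x < y" using \<open>p \<in> prs S\<close> by (cases p) (auto simp: prs_def)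
    have d: "\<rho> x \<noteq> \<rho> y" using r p by (metis inj_on_eq_iff less_irrefl)
    have d2: "\<sigma> (\<rho> x) \<noteq> \<sigma> (\<rho> y)" using s p d by (metis image_eqI inj_on_eq_iff)
    show ?thesis using d d2 p by (cases "\<rho> x < \<rho> y") (auto simp: g_def h_def min_def max_def)
  qed
  have bij: "bij_betw h (prs S) (prs (\<rho> ` S))"
  proof (rule bij_betwI')
    fix p q assume "p \<in> prs S" "q \<in> prs S"
    then obtain x y x' y' where pq: "p = (x,y)" "q = (x',y')" "x \<in> S" "y \<in> S" "x < y"
       "x' \<in> S" "y' \<in> S" "x' < y'" by (auto simp: prs_def)
    show "(h p = h q) = (p = q)"
    proof
      assume "h p = h q"
      then have "min (\<rho> x) (\<rho> y) = min (\<rho> x') (\<rho> y')" "max (\<rho> x) (\<rho> y) = max (\<rho> x') (\<rho> y')"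
        using pq by (simp_all add: h_def)
      then have "(\<rho> x = \<rho> x' \<and> \<rho> y = \<rho> y') \<or> (\<rho> x = \<rho> y' \<and> \<rho> y = \<rho> x')"
        unfolding min_def max_def by (auto split: if_splits)
      then have "(x = x' \<and> y = y') \<or> (x = y' \<and> y = x')" using r pq by (auto dest: inj_onD)
      then show "p = q" using pq by auto
    qed simp
  next
    fix p assume "p \<in> prs S"
    then obtain x y where p: "p = (x,y)" "x \<in> S" "y \<in> S" "x < y" by (cases p) (auto simp: prs_def)
    have d: "\<rho> x \<noteq> \<rho> y" using r p by (metis inj_on_eq_iff less_irrefl)
    show "h p \<in> prs (\<rho> ` S)" using p d by (auto simp: h_def prs_def min_def max_def)
  next
    fix q assume "q \<in> prs (\<rho> ` S)"
    then obtain x y where q: "q = (\<rho> x, \<rho> y)" "x \<in> S" "y \<in> S" "\<rho> x < \<rho> y" by (auto simp: prs_def)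
    have "x \<noteq> y" using q by auto
    then show "\<exists>p\<in>prs S. q = h p"
    proof (cases "x < y")
      case True then show ?thesis using q by (intro bexI[of _ "(x,y)"]) (auto simp: prs_def h_def)
    next
      case False then show ?thesis using q \<open>x \<noteq> y\<close>
        by (intro bexI[of _ "(y,x)"]) (auto simp: prs_def h_def)
    qed
  qed
  have g2: "g q = (if \<sigma> (snd q) < \<sigma> (fst q) then -1 else 1)" if "q \<in> prs (\<rho> ` S)" for q
  proof -
    obtain u v where q: "q = (u,v)" "u \<in> \<rho> ` S" "v \<in> \<rho> ` S" "u < v" using \<open>q \<in> prs (\<rho> ` S)\<close> by (cases q) (auto simp: prs_def)
    have "\<sigma> u \<noteq> \<sigma> v" using s q by (metis inj_on_eq_iff less_irrefl)
    then show ?thesis using q by (auto simp: g_def)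
  qed
  have "isgn (\<sigma> \<circ> \<rho>) S = (\<Prod>p\<in>prs S. (if \<rho> (snd p) < \<rho> (fst p) then -1 else 1) * g (h p))"
    using t by (simp add: isgn_prod[OF fin])
  also have "\<dots> = isgn \<rho> S * (\<Prod>p\<in>prs S. g (h p))"
    by (simp add: prod.distrib isgn_prod[OF fin])
  also have "(\<Prod>p\<in>prs S. g (h p)) = (\<Prod>q\<in>prs (\<rho> ` S). g q)"
    by (rule prod.reindex_bij_betw[OF bij])
  also have "\<dots> = isgn \<sigma> (\<rho> ` S)"
    using g2 by (simp add: isgn_prod[OF finite_imageI[OF fin]])
  finally show ?thesis .
qed

lemma isgn_transpose:
  assumes fin: "finite S" and ab: "a \<in> S" "b \<in> S" "a < b"
  shows "isgn (transpose a b) S = -1"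
proof -
  define M where "M = {c \<in> S. a < c \<and> c < b}"
  have fM: "finite M" using fin by (simp add: M_def)
  have I: "{(x,y). x \<in> S \<and> y \<in> S \<and> x < y \<and> transpose a b y < transpose a b x}
      = {(a,b)} \<union> ({a} \<times> M \<union> M \<times> {b})" (is "?I = _")
  proof (rule set_eqI, clarify)
    fix x y
    show "((x,y) \<in> ?I) = ((x,y) \<in> {(a,b)} \<union> ({a} \<times> M \<union> M \<times> {b}))"
      using ab by (auto simp: M_def transpose_def)
  qed
  have d1: "(a,b) \<notin> {a} \<times> M \<union> M \<times> {b}" by (auto simp: M_def)
  have d2: "({a} \<times> M) \<inter> (M \<times> {b}) = {}" by (auto simp: M_def)
  have "card ?I = Suc (card M + card M)"
    unfolding I using d1 d2 fM by (simp add: card_Un_disjoint card_cartesian_product_singleton)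
  then show ?thesis unfolding isgn_def by simp
qed

lemma isgn_sign:
  assumes "p permutes S" "finite S"
  shows "isgn p S = sign p"
  using assms
proof (induction rule: permutes_induct)
  case id
  show ?case using isgn_id[of S] by (simp add: id_def)
next
  case (swap a b p)
  have pp: "p permutes S" using swap by blast
  have ab: "a \<in> S" "b \<in> S" "a \<noteq> b" using swap by blast+
  have IH: "isgn p S = sign p" using swap by blast
  have inj1: "inj_on p S" using pp by (meson permutes_inj_on)
  have "isgn (transpose a b \<circ> p) S = isgn p S * isgn (transpose a b) (p ` S)"
    by (rule isgn_cocycle[OF assms(2) inj1]) (rule inj_on_subset[OF inj_transpose], simp)
  also have "p ` S = S" using pp by (rule permutes_image)
  also have "isgn (transpose a b) S = -1"
  proof (cases "a < b")
    case True then show ?thesis using isgn_transpose[OF assms(2) ab(1,2)] by simp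
  next
    case False then have "b < a" using ab(3) by simp
    then show ?thesis using isgn_transpose[OF assms(2) ab(2,1)] by (simp add: transpose_commute)
  qed
  finally have X: "isgn (transpose a b \<circ> p) S = isgn p S * -1" .
  have sg: "sign (transpose a b \<circ> p) = sign (transpose a b) * sign p"
    by (rule sign_compose[OF permutation_swap_id permutes_imp_permutation[OF assms(2) pp]])
  have "isgn (transpose a b \<circ> p) S = sign (transpose a b \<circ> p)" using X sg IH ab(3) by (simp add: sign_swap_id)
  then show ?case by (simp add: comp_def)
qed


lemma eimg_comp: "eimg (\<tau> \<circ> \<sigma>) e = eimg \<tau> (eimg \<sigma> e)"
  by (cases "\<sigma> (fst e) \<le> \<sigma> (snd e)") (auto simp: eimg_def min_def max_def)

lemma eimg_comp_fun: "eimg (\<tau> \<circ> \<sigma>) = eimg \<tau> \<circ> eimg \<sigma>"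
  by (rule ext) (simp add: eimg_comp)

lemma eimg_id: "e \<in> Kn n \<Longrightarrow> eimg id e = e"
  by (cases e) (auto simp: eimg_def Kn_def)

lemma perms_in: "\<sigma> \<in> perms n \<Longrightarrow> i \<in> {1..n} \<Longrightarrow> \<sigma> i \<in> {1..n}"
  by (metis mem_Collect_eq perms_def permutes_in_image)

lemma perms_inj: "\<sigma> \<in> perms n \<Longrightarrow> inj \<sigma>"
  unfolding perms_def by (auto dest: permutes_inj)

lemma eimg_K: assumes "\<sigma> \<in> perms n" "e \<in> Kn n" shows "eimg \<sigma> e \<in> Kn n"
proof -
  obtain i j where e: "e = (i,j)" "1 \<le> i" "i < j" "j \<le> n" using assms(2) by (cases e) (auto simp: Kn_def)
  have "\<sigma> i \<in> {1..n}" "\<sigma> j \<in> {1..n}" using e perms_in[OF assms(1)] by auto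
  moreover have "\<sigma> i \<noteq> \<sigma> j" using perms_inj[OF assms(1)] e by (metis inj_eq less_irrefl)
  ultimately show ?thesis using e by (auto simp: eimg_def Kn_def min_def max_def)
qed

lemma perms_id: "id \<in> perms n" by (simp add: perms_def permutes_id)
lemma perms_comp: "\<sigma> \<in> perms n \<Longrightarrow> \<tau> \<in> perms n \<Longrightarrow> \<tau> \<circ> \<sigma> \<in> perms n"
  by (simp add: perms_def permutes_compose)
lemma perms_inv: "\<sigma> \<in> perms n \<Longrightarrow> inv \<sigma> \<in> perms n"
  by (simp add: perms_def permutes_inv)
lemma perms_inv_o: "\<sigma> \<in> perms n \<Longrightarrow> inv \<sigma> \<circ> \<sigma> = id \<and> \<sigma> \<circ> inv \<sigma> = id"
  by (simp add: perms_def permutes_inv_o)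
lemma finite_perms: "finite (perms n)"
  by (simp add: perms_def finite_permutations)

lemma eimg_inv1: "\<sigma> \<in> perms n \<Longrightarrow> e \<in> Kn n \<Longrightarrow> eimg (inv \<sigma>) (eimg \<sigma> e) = e"
  by (metis eimg_comp eimg_id perms_inv_o)
lemma eimg_inv2: "\<sigma> \<in> perms n \<Longrightarrow> e \<in> Kn n \<Longrightarrow> eimg \<sigma> (eimg (inv \<sigma>) e) = e"
  by (metis eimg_comp eimg_id perms_inv_o)
lemma eimg_inj: "\<sigma> \<in> perms n \<Longrightarrow> inj_on (eimg \<sigma>) (Kn n)"
  by (metis eimg_inv1 inj_onI)

lemma finite_Kn: "finite (Kn n)"
  by (rule finite_subset[of _ "{1..n} \<times> {1..n}"]) (auto simp: Kn_def)

lemma gimg_comp: "gimg (\<tau> \<circ> \<sigma>) \<Delta> = gimg \<tau> (gimg \<sigma> \<Delta>)"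
  by (simp add: gimg_def eimg_comp_fun image_comp)
lemma gimg_K: "\<sigma> \<in> perms n \<Longrightarrow> \<Delta> \<subseteq> Kn n \<Longrightarrow> gimg \<sigma> \<Delta> \<subseteq> Kn n"
  by (auto simp: gimg_def eimg_K)
lemma gimg_id: "\<Delta> \<subseteq> Kn n \<Longrightarrow> gimg id \<Delta> = \<Delta>"
proof -
  assume a: "\<Delta> \<subseteq> Kn n"
  have "eimg id ` \<Delta> = id ` \<Delta>" by (rule image_cong) (use a eimg_id in auto)
  then show ?thesis by (simp add: gimg_def)
qed
lemma gimg_inv1: "\<sigma> \<in> perms n \<Longrightarrow> \<Delta> \<subseteq> Kn n \<Longrightarrow> gimg (inv \<sigma>) (gimg \<sigma> \<Delta>) = \<Delta>"
  by (metis gimg_comp gimg_id perms_inv_o)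
lemma gimg_inv2: "\<sigma> \<in> perms n \<Longrightarrow> \<Delta> \<subseteq> Kn n \<Longrightarrow> gimg \<sigma> (gimg (inv \<sigma>) \<Delta>) = \<Delta>"
  by (metis gimg_comp gimg_id perms_inv_o)
lemma card_gimg: "\<sigma> \<in> perms n \<Longrightarrow> \<Delta> \<subseteq> Kn n \<Longrightarrow> card (gimg \<sigma> \<Delta>) = card \<Delta>"
  unfolding gimg_def by (meson card_image eimg_inj inj_on_subset)

lemma act_img:
  assumes "\<sigma> \<in> perms n" "\<Delta> \<subseteq> Kn n"
  shows "act n \<sigma> c (gimg \<sigma> \<Delta>) = act_sign \<sigma> \<Delta> * c \<Delta>"
proof -
  have "{\<Delta>'. \<Delta>' \<subseteq> Kn n \<and> gimg \<sigma> \<Delta>' = gimg \<sigma> \<Delta>} = {\<Delta>}"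
    using assms by (auto, metis gimg_inv1, metis gimg_inv1)
  then show ?thesis by (simp add: act_def)
qed

lemma act_out:
  assumes "\<sigma> \<in> perms n" "\<not> \<Gamma> \<subseteq> Kn n"
  shows "act n \<sigma> c \<Gamma> = 0"
proof -
  have "{\<Delta>'. \<Delta>' \<subseteq> Kn n \<and> gimg \<sigma> \<Delta>' = \<Gamma>} = {}"
    using assms gimg_K by blast
  then show ?thesis unfolding act_def by (simp only: sum.empty)
qed

lemma lexless_eq: "lexless = (<)"
  by (intro ext, rename_tac e f, case_tac e, case_tac f) (auto simp: lexless_def)

lemma act_sign_isgn: "act_sign \<sigma> \<Delta> = of_int (isgn (eimg \<sigma>) \<Delta>)"
  unfolding act_sign_def isgn_def lexless_eq by (simp only: of_int_power of_int_minus of_int_1)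

lemma act_sign_comp:
  assumes "\<sigma> \<in> perms n" "\<tau> \<in> perms n" "\<Delta> \<subseteq> Kn n"
  shows "act_sign (\<tau> \<circ> \<sigma>) \<Delta> = act_sign \<sigma> \<Delta> * act_sign \<tau> (gimg \<sigma> \<Delta>)"
proof -
  have f: "finite \<Delta>" using assms(3) finite_Kn finite_subset by blast
  have i1: "inj_on (eimg \<sigma>) \<Delta>" by (rule inj_on_subset[OF eimg_inj[OF assms(1)] assms(3)])
  have "eimg \<sigma> ` \<Delta> \<subseteq> Kn n" using gimg_K[OF assms(1,3)] by (simp add: gimg_def)
  then have i2: "inj_on (eimg \<tau>) (eimg \<sigma> ` \<Delta>)" by (rule inj_on_subset[OF eimg_inj[OF assms(2)]])
  show ?thesis unfolding act_sign_isgn eimg_comp_fun isgn_cocycle[OF f i1 i2]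
    by (simp only: gimg_def of_int_mult)
qed

lemma act_sign_id: "\<Delta> \<subseteq> Kn n \<Longrightarrow> act_sign id \<Delta> = 1"
proof -
  assume "\<Delta> \<subseteq> Kn n"
  then have "isgn (eimg id) \<Delta> = isgn id \<Delta>" by (intro isgn_cong) (auto simp: eimg_id)
  then show ?thesis by (simp add: act_sign_isgn isgn_id)
qed

lemma act_sign_pm: "act_sign \<sigma> \<Delta> = 1 \<or> act_sign \<sigma> \<Delta> = -1"
  unfolding act_sign_isgn using isgn_pm[of "eimg \<sigma>" \<Delta>] by (metis of_int_1 of_int_minus)

lemma act_sign_stab:
  assumes "\<rho> \<in> Stab n \<Delta>" "\<Delta> \<subseteq> Kn n"
  shows "act_sign \<rho> \<Delta> = of_int (sign (edge_perm \<rho> \<Delta>))"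
proof -
  have r: "\<rho> \<in> perms n" "gimg \<rho> \<Delta> = \<Delta>" using assms by (auto simp: Stab_def)
  have f: "finite \<Delta>" using assms(2) finite_Kn finite_subset by blast
  have i1: "inj_on (eimg \<rho>) \<Delta>" using r assms eimg_inj inj_on_subset by blast
  have b: "bij_betw (eimg \<rho>) \<Delta> \<Delta>" using i1 r(2) by (simp add: bij_betw_def gimg_def)
  have b2: "bij_betw (edge_perm \<rho> \<Delta>) \<Delta> \<Delta>"
    using b by (rule bij_betw_cong[THEN iffD1, rotated]) (simp add: edge_perm_def)
  have p: "edge_perm \<rho> \<Delta> permutes \<Delta>"
    by (rule bij_imp_permutes[OF b2]) (simp add: edge_perm_def)
  have "isgn (eimg \<rho>) \<Delta> = isgn (edge_perm \<rho> \<Delta>) \<Delta>" by (rule isgn_cong) (simp add: edge_perm_def)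
  also have "\<dots> = sign (edge_perm \<rho> \<Delta>)" by (rule isgn_sign[OF p f])
  finally show ?thesis by (simp add: act_sign_isgn)
qed

definition goodg :: "nat \<Rightarrow> (nat \<times> nat) set \<Rightarrow> bool" where
  "goodg n \<Delta> \<longleftrightarrow> (\<forall>\<rho> \<in> Stab n \<Delta>. act_sign \<rho> \<Delta> = 1)"

lemma inv_iff_good: "\<Delta> \<subseteq> Kn n \<Longrightarrow> invariant_graph n \<Delta> \<longleftrightarrow> goodg n \<Delta>"
  unfolding invariant_graph_def goodg_def using act_sign_stab by (auto simp: sign_def)

lemma good_transfer:
  assumes "\<Delta> \<subseteq> Kn n" "goodg n \<Delta>" "\<sigma> \<in> perms n"
  shows "goodg n (gimg \<sigma> \<Delta>)"
  unfolding goodg_def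
proof
  fix \<rho> assume "\<rho> \<in> Stab n (gimg \<sigma> \<Delta>)"
  then have r: "\<rho> \<in> perms n" "gimg \<rho> (gimg \<sigma> \<Delta>) = gimg \<sigma> \<Delta>" by (auto simp: Stab_def)
  define \<rho>' where "\<rho>' = inv \<sigma> \<circ> (\<rho> \<circ> \<sigma>)"
  have si: "inv \<sigma> \<in> perms n" using assms(3) by (rule perms_inv)
  have rs: "\<rho> \<circ> \<sigma> \<in> perms n" using assms(3) r(1) by (rule perms_comp)
  have "\<rho>' \<in> perms n" unfolding \<rho>'_def using rs si by (rule perms_comp)
  moreover have "gimg \<rho>' \<Delta> = \<Delta>" unfolding \<rho>'_def gimg_comp r(2)
    using assms by (simp add: gimg_inv1)
  ultimately have "\<rho>' \<in> Stab n \<Delta>" by (simp add: Stab_def)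
  then have 1: "act_sign \<rho>' \<Delta> = 1" using assms(2) by (simp add: goodg_def)
  have sK: "gimg \<sigma> \<Delta> \<subseteq> Kn n" using assms gimg_K by blast
  have 2: "act_sign \<rho>' \<Delta> = act_sign \<sigma> \<Delta> * act_sign \<rho> (gimg \<sigma> \<Delta>) * act_sign (inv \<sigma>) (gimg \<sigma> \<Delta>)"
    unfolding \<rho>'_def using act_sign_comp[OF rs si assms(1)] act_sign_comp[OF assms(3) r(1) assms(1)]
    by (simp add: gimg_comp r(2))
  have 3: "act_sign \<sigma> \<Delta> * act_sign (inv \<sigma>) (gimg \<sigma> \<Delta>) = 1"
    using act_sign_comp[OF assms(3) si assms(1)] act_sign_id[OF assms(1)] perms_inv_o[OF assms(3)]
    by simp
  show "act_sign \<rho> (gimg \<sigma> \<Delta>) = 1" using 1 2 3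
    by (metis mult.commute mult.left_commute mult_1_right)
qed


lemma orbit_iff: "\<Gamma> \<in> orbit n \<Delta> \<longleftrightarrow> (\<exists>\<sigma>\<in>perms n. \<Gamma> = gimg \<sigma> \<Delta>)"
  unfolding orbit_def by auto

lemma orbit_self: "\<Delta> \<subseteq> Kn n \<Longrightarrow> \<Delta> \<in> orbit n \<Delta>"
  unfolding orbit_iff using perms_id gimg_id by metis

lemma orbit_K: "\<Delta> \<subseteq> Kn n \<Longrightarrow> \<Gamma> \<in> orbit n \<Delta> \<Longrightarrow> \<Gamma> \<subseteq> Kn n"
  unfolding orbit_iff using gimg_K by blast

lemma orbit_eq:
  assumes "\<Delta> \<subseteq> Kn n" "\<Gamma> \<in> orbit n \<Delta>"
  shows "orbit n \<Gamma> = orbit n \<Delta>"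
proof -
  obtain \<sigma>0 where s: "\<sigma>0 \<in> perms n" "\<Gamma> = gimg \<sigma>0 \<Delta>" using assms(2) orbit_iff by blast
  show ?thesis
  proof (rule set_eqI)
    fix X
    show "X \<in> orbit n \<Gamma> \<longleftrightarrow> X \<in> orbit n \<Delta>"
    proof
      assume "X \<in> orbit n \<Gamma>"
      then obtain \<tau> where t: "\<tau> \<in> perms n" "X = gimg \<tau> \<Gamma>" using orbit_iff by blast
      then have "X = gimg (\<tau> \<circ> \<sigma>0) \<Delta>" using s by (simp add: gimg_comp)
      then show "X \<in> orbit n \<Delta>" using orbit_iff perms_comp[OF s(1) t(1)] by blast
    next
      assume "X \<in> orbit n \<Delta>"
      then obtain \<tau> where t: "\<tau> \<in> perms n" "X = gimg \<tau> \<Delta>" using orbit_iff by blast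
      have "gimg (inv \<sigma>0) \<Gamma> = \<Delta>" using s assms(1) gimg_inv1 by blast
      then have "X = gimg (\<tau> \<circ> inv \<sigma>0) \<Gamma>" using t by (simp add: gimg_comp)
      then show "X \<in> orbit n \<Gamma>" using orbit_iff perms_comp[OF perms_inv[OF s(1)] t(1)] by blast
    qed
  qed
qed

lemma Dclass_mem:
  assumes "D \<in> Dclasses n" "\<Gamma> \<in> D"
  shows "\<Gamma> \<subseteq> Kn n \<and> goodg n \<Gamma> \<and> D = orbit n \<Gamma>"
proof -
  obtain \<Delta> where d: "D = orbit n \<Delta>" "\<Delta> \<subseteq> Kn n" "invariant_graph n \<Delta>"
    using assms(1) unfolding Dclasses_def by blast
  have g: "goodg n \<Delta>" using d inv_iff_good by blast
  obtain \<sigma> where s: "\<sigma> \<in> perms n" "\<Gamma> = gimg \<sigma> \<Delta>" using assms(2) d orbit_iff by blast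
  show ?thesis using s d g good_transfer gimg_K orbit_eq assms(2) by metis
qed

lemma finite_Dclasses: "finite (Dclasses n)"
proof (rule finite_subset[of _ "Pow (Pow (Kn n))"])
  show "Dclasses n \<subseteq> Pow (Pow (Kn n))"
    unfolding Dclasses_def using orbit_K by blast
  show "finite (Pow (Pow (Kn n)))" using finite_Kn by simp
qed

lemma act_comp:
  assumes "\<sigma> \<in> perms n" "\<tau> \<in> perms n"
  shows "act n \<tau> (act n \<sigma> c) = act n (\<tau> \<circ> \<sigma>) c"
proof (rule ext)
  fix \<Gamma>
  show "act n \<tau> (act n \<sigma> c) \<Gamma> = act n (\<tau> \<circ> \<sigma>) c \<Gamma>"
  proof (cases "\<Gamma> \<subseteq> Kn n")
    case True
    define \<Delta> where "\<Delta> = gimg (inv \<sigma>) (gimg (inv \<tau>) \<Gamma>)"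
    have tK: "gimg (inv \<tau>) \<Gamma> \<subseteq> Kn n" using True perms_inv[OF assms(2)] gimg_K by blast
    have dK: "\<Delta> \<subseteq> Kn n" unfolding \<Delta>_def using tK perms_inv[OF assms(1)] gimg_K by blast
    have G: "\<Gamma> = gimg \<tau> (gimg \<sigma> \<Delta>)" unfolding \<Delta>_def
      using gimg_inv2[OF assms(1) tK] gimg_inv2[OF assms(2) True] by simp
    have sK: "gimg \<sigma> \<Delta> \<subseteq> Kn n" using dK assms(1) gimg_K by blast
    have "act n \<tau> (act n \<sigma> c) \<Gamma> = act_sign \<tau> (gimg \<sigma> \<Delta>) * (act_sign \<sigma> \<Delta> * c \<Delta>)"
      unfolding G act_img[OF assms(2) sK] act_img[OF assms(1) dK] ..
    also have "\<dots> = act_sign (\<tau> \<circ> \<sigma>) \<Delta> * c \<Delta>"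
      using act_sign_comp[OF assms dK] by simp
    also have "\<dots> = act n (\<tau> \<circ> \<sigma>) c \<Gamma>"
      using act_img[OF perms_comp[OF assms] dK] G by (simp add: gimg_comp)
    finally show ?thesis .
  next
    case False
    then show ?thesis using act_out assms perms_comp by metis
  qed
qed

lemma act_sum:
  "act n \<tau> (\<lambda>\<Gamma>. k * (\<Sum>\<sigma>\<in>A. f \<sigma> \<Gamma>)) \<Gamma> = k * (\<Sum>\<sigma>\<in>A. act n \<tau> (f \<sigma>) \<Gamma>)"
proof -
  have "act n \<tau> (\<lambda>\<Gamma>. k * (\<Sum>\<sigma>\<in>A. f \<sigma> \<Gamma>)) \<Gamma>
     = (\<Sum>\<Delta>\<in>{\<Delta>. \<Delta> \<subseteq> Kn n \<and> gimg \<tau> \<Delta> = \<Gamma>}. \<Sum>\<sigma>\<in>A. k * (act_sign \<tau> \<Delta> * f \<sigma> \<Delta>))"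
    unfolding act_def by (simp add: sum_distrib_left mult.left_commute)
  also have "\<dots> = (\<Sum>\<sigma>\<in>A. \<Sum>\<Delta>\<in>{\<Delta>. \<Delta> \<subseteq> Kn n \<and> gimg \<tau> \<Delta> = \<Gamma>}. k * (act_sign \<tau> \<Delta> * f \<sigma> \<Delta>))"
    by (rule sum.swap)
  also have "\<dots> = k * (\<Sum>\<sigma>\<in>A. act n \<tau> (f \<sigma>) \<Gamma>)"
    unfolding act_def by (simp add: sum_distrib_left)
  finally show ?thesis .
qed

lemma bij_comp_perms:
  assumes "\<tau> \<in> perms n"
  shows "bij_betw ((\<circ>) \<tau>) (perms n) (perms n)"
proof (rule bij_betwI[where g="(\<circ>) (inv \<tau>)"])
  show "(\<circ>) \<tau> \<in> perms n \<rightarrow> perms n" using assms perms_comp by blast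
  show "(\<circ>) (inv \<tau>) \<in> perms n \<rightarrow> perms n" using assms perms_comp perms_inv by blast
  show "inv \<tau> \<circ> (\<tau> \<circ> x) = x" for x using perms_inv_o[OF assms] by (simp add: o_assoc)
  show "\<tau> \<circ> (inv \<tau> \<circ> y) = y" for y using perms_inv_o[OF assms] by (simp add: o_assoc)
qed

lemma alpha_Hinv:
  assumes "\<Delta> \<subseteq> Kn n"
  shows "alpha n \<Delta> \<in> Hinv n"
proof -
  have "alpha n \<Delta> \<in> Hcoh n"
    unfolding Hcoh_def alpha_def using act_out by simp
  moreover have "act n \<tau> (alpha n \<Delta>) = alpha n \<Delta>" if t: "\<tau> \<in> perms n" for \<tau>
  proof (rule ext)
    fix \<Gamma>
    have "act n \<tau> (alpha n \<Delta>) \<Gamma>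
        = (1 / of_nat (card (Stab n \<Delta>))) * (\<Sum>\<sigma>\<in>perms n. act n \<tau> (act n \<sigma> (mono \<Delta>)) \<Gamma>)"
      unfolding alpha_def by (rule act_sum)
    also have "(\<Sum>\<sigma>\<in>perms n. act n \<tau> (act n \<sigma> (mono \<Delta>)) \<Gamma>) = (\<Sum>\<sigma>\<in>perms n. act n (\<tau> \<circ> \<sigma>) (mono \<Delta>) \<Gamma>)"
      using act_comp t by (intro sum.cong) auto
    also have "\<dots> = (\<Sum>\<sigma>\<in>perms n. act n \<sigma> (mono \<Delta>) \<Gamma>)"
      by (rule sum.reindex_bij_betw[OF bij_comp_perms[OF t], where g="\<lambda>\<sigma>. act n \<sigma> (mono \<Delta>) \<Gamma>"])
    finally show "act n \<tau> (alpha n \<Delta>) \<Gamma> = alpha n \<Delta> \<Gamma>" unfolding alpha_def .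
  qed
  ultimately show ?thesis unfolding Hinv_def by blast
qed

lemma alpha_zero:
  assumes "\<Delta> \<subseteq> Kn n" "\<Gamma> \<notin> orbit n \<Delta>"
  shows "alpha n \<Delta> \<Gamma> = 0"
proof -
  have "act n \<sigma> (mono \<Delta>) \<Gamma> = 0" if s: "\<sigma> \<in> perms n" for \<sigma>
  proof (cases "\<Gamma> \<subseteq> Kn n")
    case True
    have iK: "gimg (inv \<sigma>) \<Gamma> \<subseteq> Kn n" using True perms_inv[OF s] gimg_K by blast
    have G: "\<Gamma> = gimg \<sigma> (gimg (inv \<sigma>) \<Gamma>)" using gimg_inv2[OF s True] by simp
    have ne: "gimg (inv \<sigma>) \<Gamma> \<noteq> \<Delta>" using G assms(2) s orbit_iff by metis
    show ?thesis by (subst G, subst act_img[OF s iK]) (simp add: mono_def ne)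
  next
    case False then show ?thesis using act_out s by blast
  qed
  then show ?thesis unfolding alpha_def by simp
qed

lemma alpha_val:
  assumes dK: "\<Delta> \<subseteq> Kn n" and g: "goodg n \<Delta>" and s0: "\<sigma>0 \<in> perms n"
  shows "alpha n \<Delta> (gimg \<sigma>0 \<Delta>) = act_sign \<sigma>0 \<Delta>"
proof -
  define \<Gamma> where "\<Gamma> = gimg \<sigma>0 \<Delta>"
  have GK: "\<Gamma> \<subseteq> Kn n" unfolding \<Gamma>_def using s0 dK gimg_K by blast
  have tm: "act n \<sigma> (mono \<Delta>) \<Gamma> = (if gimg \<sigma> \<Delta> = \<Gamma> then act_sign \<sigma>0 \<Delta> else 0)"
    if s: "\<sigma> \<in> perms n" for \<sigma>
  proof -
    have iK: "gimg (inv \<sigma>) \<Gamma> \<subseteq> Kn n" using GK perms_inv[OF s] gimg_K by blast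
    have G: "\<Gamma> = gimg \<sigma> (gimg (inv \<sigma>) \<Gamma>)" using gimg_inv2[OF s GK] by simp
    have a: "act n \<sigma> (mono \<Delta>) \<Gamma> = act_sign \<sigma> (gimg (inv \<sigma>) \<Gamma>) * mono \<Delta> (gimg (inv \<sigma>) \<Gamma>)"
      by (subst G, subst act_img[OF s iK]) simp
    show ?thesis
    proof (cases "gimg \<sigma> \<Delta> = \<Gamma>")
      case True
      then have e: "gimg (inv \<sigma>) \<Gamma> = \<Delta>" using gimg_inv1[OF s dK] by simp
      define \<rho> where "\<rho> = inv \<sigma>0 \<circ> \<sigma>"
      have rp: "\<rho> \<in> perms n" unfolding \<rho>_def by (rule perms_comp[OF s perms_inv[OF s0]])
      have "gimg \<rho> \<Delta> = \<Delta>" unfolding \<rho>_def gimg_comp True \<Gamma>_def using gimg_inv1[OF s0 dK] .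
      then have rS: "\<rho> \<in> Stab n \<Delta>" using rp by (simp add: Stab_def)
      have sr: "\<sigma> = \<sigma>0 \<circ> \<rho>" unfolding \<rho>_def using perms_inv_o[OF s0] by (simp add: o_assoc)
      have "act_sign \<sigma> \<Delta> = act_sign \<rho> \<Delta> * act_sign \<sigma>0 (gimg \<rho> \<Delta>)"
        unfolding sr by (rule act_sign_comp[OF rp s0 dK])
      also have "\<dots> = act_sign \<sigma>0 \<Delta>" using rS g \<open>gimg \<rho> \<Delta> = \<Delta>\<close> by (simp add: goodg_def)
      finally show ?thesis using a e True by (simp add: mono_def)
    next
      case False
      then have "gimg (inv \<sigma>) \<Gamma> \<noteq> \<Delta>" using G by metis
      then show ?thesis using a False by (simp add: mono_def)
    qed
  qed
  have fS: "finite (Stab n \<Delta>)" using finite_perms by (rule finite_subset[rotated]) (auto simp: Stab_def)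
  have idS: "id \<in> Stab n \<Delta>" using perms_id gimg_id[OF dK] by (simp add: Stab_def)
  have cpos: "card (Stab n \<Delta>) > 0" using fS idS card_gt_0_iff by blast
  have bij: "bij_betw ((\<circ>) \<sigma>0) (Stab n \<Delta>) {\<sigma> \<in> perms n. gimg \<sigma> \<Delta> = \<Gamma>}"
  proof (rule bij_betwI[where g="(\<circ>) (inv \<sigma>0)"])
    show "(\<circ>) \<sigma>0 \<in> Stab n \<Delta> \<rightarrow> {\<sigma> \<in> perms n. gimg \<sigma> \<Delta> = \<Gamma>}"
      using s0 perms_comp by (auto simp: Stab_def gimg_comp \<Gamma>_def)
    show "(\<circ>) (inv \<sigma>0) \<in> {\<sigma> \<in> perms n. gimg \<sigma> \<Delta> = \<Gamma>} \<rightarrow> Stab n \<Delta>"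
      using s0 perms_comp perms_inv gimg_inv1[OF s0 dK] by (auto simp: Stab_def gimg_comp \<Gamma>_def)
    show "inv \<sigma>0 \<circ> (\<sigma>0 \<circ> x) = x" for x using perms_inv_o[OF s0] by (simp add: o_assoc)
    show "\<sigma>0 \<circ> (inv \<sigma>0 \<circ> y) = y" for y using perms_inv_o[OF s0] by (simp add: o_assoc)
  qed
  have "(\<Sum>\<sigma>\<in>perms n. act n \<sigma> (mono \<Delta>) \<Gamma>) = (\<Sum>\<sigma>\<in>perms n. if gimg \<sigma> \<Delta> = \<Gamma> then act_sign \<sigma>0 \<Delta> else 0)"
    using tm by (intro sum.cong) auto
  also have "\<dots> = (\<Sum>\<sigma>\<in>{\<sigma> \<in> perms n. gimg \<sigma> \<Delta> = \<Gamma>}. act_sign \<sigma>0 \<Delta>)"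
    by (rule sum.inter_filter[symmetric]) (rule finite_perms)
  also have "\<dots> = of_nat (card (Stab n \<Delta>)) * act_sign \<sigma>0 \<Delta>"
    using bij_betw_same_card[OF bij] by simp
  finally show ?thesis using cpos unfolding alpha_def \<Gamma>_def by simp
qed


theorem theorem2p8:
  fixes n :: nat and rep :: "(nat \<times> nat) set set \<Rightarrow> (nat \<times> nat) set"
  assumes "n \<ge> 1"
    and "\<forall>D \<in> Dclasses n. rep D \<in> D"
  shows "(\<forall>D \<in> Dclasses n. alpha n (rep D) \<in> Hinv n \<inter> Hdeg n (card (rep D)))
    \<and> (\<forall>a :: (nat \<times> nat) set set \<Rightarrow> rat.
          (\<forall>\<Gamma>. (\<Sum>D \<in> Dclasses n. a D * alpha n (rep D) \<Gamma>) = 0) \<longrightarrow> (\<forall>D \<in> Dclasses n. a D = 0))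
    \<and> (\<forall>c \<in> Hinv n. \<exists>a :: (nat \<times> nat) set set \<Rightarrow> rat.
          c = (\<lambda>\<Gamma>. \<Sum>D \<in> Dclasses n. a D * alpha n (rep D) \<Gamma>))"
proof -
  have R: "rep D \<subseteq> Kn n \<and> goodg n (rep D) \<and> D = orbit n (rep D)" if "D \<in> Dclasses n" for D
    using Dclass_mem that assms(2) by blast
  have P1: "alpha n (rep D) \<in> Hinv n \<inter> Hdeg n (card (rep D))" if D: "D \<in> Dclasses n" for D
  proof -
    have K: "rep D \<subseteq> Kn n" using R D by blast
    have h: "alpha n (rep D) \<in> Hinv n" using alpha_Hinv[OF K] .
    have "alpha n (rep D) \<Gamma> = 0" if c: "card \<Gamma> \<noteq> card (rep D)" for \<Gamma>
    proof (cases "\<Gamma> \<in> orbit n (rep D)")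
      case True
      then obtain \<sigma> where "\<sigma> \<in> perms n" "\<Gamma> = gimg \<sigma> (rep D)" using orbit_iff by blast
      then have "card \<Gamma> = card (rep D)" using card_gimg K by blast
      then show ?thesis using c by blast
    next
      case False then show ?thesis using alpha_zero K by blast
    qed
    then show ?thesis using h unfolding Hinv_def Hdeg_def by blast
  qed
  have val: "alpha n (rep D) (rep D0) = (if D = D0 then 1 else 0)"
    if D: "D \<in> Dclasses n" and D0: "D0 \<in> Dclasses n" for D D0
  proof (cases "D = D0")
    case True
    have K: "rep D \<subseteq> Kn n" "goodg n (rep D)" using R D by blast+
    have "alpha n (rep D) (gimg id (rep D)) = act_sign id (rep D)" by (rule alpha_val[OF K perms_id])
    then show ?thesis using True K gimg_id act_sign_id by simp
  next
    case False
    have K: "rep D \<subseteq> Kn n" using R D by blast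
    have "rep D0 \<notin> D"
    proof
      assume "rep D0 \<in> D"
      then have "D = orbit n (rep D0)" using Dclass_mem D by blast
      also have "\<dots> = D0" using R D0 by blast
      finally show False using False by blast
    qed
    then have "rep D0 \<notin> orbit n (rep D)" using R D by blast
    then show ?thesis using alpha_zero K False by simp
  qed
  have P2: "\<forall>D \<in> Dclasses n. a D = 0" if H: "\<forall>\<Gamma>. (\<Sum>D \<in> Dclasses n. a D * alpha n (rep D) \<Gamma>) = 0" for a
  proof
    fix D0 assume D0: "D0 \<in> Dclasses n"
    have "0 = (\<Sum>D \<in> Dclasses n. a D * alpha n (rep D) (rep D0))" using H by simp
    also have "\<dots> = (\<Sum>D \<in> Dclasses n. if D = D0 then a D else 0)"
      using val D0 by (intro sum.cong) auto
    also have "\<dots> = a D0" using D0 finite_Dclasses by simp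
    finally show "a D0 = 0" by simp
  qed
  have P3: "\<exists>a. c = (\<lambda>\<Gamma>. \<Sum>D \<in> Dclasses n. a D * alpha n (rep D) \<Gamma>)" if c: "c \<in> Hinv n" for c
  proof (intro exI[of _ "\<lambda>D. c (rep D)"] ext)
    fix \<Gamma>
    have cinv: "act n \<sigma> c = c" if "\<sigma> \<in> perms n" for \<sigma> using c that by (simp add: Hinv_def)
    have trm: "c (rep D) * alpha n (rep D) \<Gamma> = (if \<Gamma> \<in> D then c \<Gamma> else 0)" if D: "D \<in> Dclasses n" for D
    proof (cases "\<Gamma> \<in> D")
      case True
      have K: "rep D \<subseteq> Kn n" "goodg n (rep D)" "D = orbit n (rep D)" using R D by blast+
      then obtain \<sigma>0 where s: "\<sigma>0 \<in> perms n" "\<Gamma> = gimg \<sigma>0 (rep D)" using True orbit_iff by blast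
      have "c \<Gamma> = act n \<sigma>0 c \<Gamma>" using cinv s by simp
      also have "\<dots> = act_sign \<sigma>0 (rep D) * c (rep D)" using s act_img K by simp
      finally show ?thesis using alpha_val[OF K(1,2) s(1)] s True by simp
    next
      case False
      have K: "rep D \<subseteq> Kn n" "D = orbit n (rep D)" using R D by blast+
      then show ?thesis using alpha_zero False by simp
    qed
    have "(\<Sum>D \<in> Dclasses n. c (rep D) * alpha n (rep D) \<Gamma>) = (\<Sum>D \<in> Dclasses n. if \<Gamma> \<in> D then c \<Gamma> else 0)"
      using trm by (intro sum.cong) auto
    also have "\<dots> = c \<Gamma>"
    proof (cases "\<exists>D0 \<in> Dclasses n. \<Gamma> \<in> D0")
      case True
      then obtain D0 where D0: "D0 \<in> Dclasses n" "\<Gamma> \<in> D0" by blast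
      have "(\<Sum>D \<in> Dclasses n. if \<Gamma> \<in> D then c \<Gamma> else 0) = (\<Sum>D \<in> Dclasses n. if D = D0 then c \<Gamma> else 0)"
      proof (intro sum.cong refl)
        fix D assume D: "D \<in> Dclasses n"
        have "\<Gamma> \<in> D \<longleftrightarrow> D = D0"
        proof
          assume "\<Gamma> \<in> D" then show "D = D0" using Dclass_mem D D0 by metis
        qed (use D0 in simp)
        then show "(if \<Gamma> \<in> D then c \<Gamma> else 0) = (if D = D0 then c \<Gamma> else 0)" by simp
      qed
      also have "\<dots> = c \<Gamma>" using D0 finite_Dclasses by simp
      finally show ?thesis .
    next
      case False
      then have s0: "(\<Sum>D \<in> Dclasses n. if \<Gamma> \<in> D then c \<Gamma> else 0) = 0" by (intro sum.neutral) auto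
      have "c \<Gamma> = 0"
      proof (cases "\<Gamma> \<subseteq> Kn n")
        case False then show ?thesis using c by (simp add: Hinv_def Hcoh_def)
      next
        case True
        have "\<not> invariant_graph n \<Gamma>"
        proof
          assume "invariant_graph n \<Gamma>"
          then have "orbit n \<Gamma> \<in> Dclasses n" using True unfolding Dclasses_def by blast
          then show False using \<open>\<not> (\<exists>D0 \<in> Dclasses n. \<Gamma> \<in> D0)\<close> orbit_self[OF True] by blast
        qed
        then have "\<not> goodg n \<Gamma>" using inv_iff_good True by blast
        then obtain \<rho> where r: "\<rho> \<in> Stab n \<Gamma>" "act_sign \<rho> \<Gamma> \<noteq> 1" unfolding goodg_def by blast
        then have m: "act_sign \<rho> \<Gamma> = -1" using act_sign_pm by blast
        have rp: "\<rho> \<in> perms n" "gimg \<rho> \<Gamma> = \<Gamma>" using r by (auto simp: Stab_def)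
        have "c \<Gamma> = act n \<rho> c (gimg \<rho> \<Gamma>)" using cinv rp by simp
        also have "\<dots> = - c \<Gamma>" using act_img[OF rp(1) True] m by simp
        finally show ?thesis by simp
      qed
      then show ?thesis using s0 by simp
    qed
    finally show "c \<Gamma> = (\<Sum>D \<in> Dclasses n. c (rep D) * alpha n (rep D) \<Gamma>)" by simp
  qed
  show ?thesis using P1 P2 P3 by blast
qed

end
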